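(* Let $(V, B)$ be a finite-dimensional real or complex symplectic vector space and let $P$ be a linear operator on $V$ that is self-adjoint with respect to $B$. Let $V = \bigoplus_\lambda V^\lambda$ be the decomposition of $V$ into generalized eigenspaces of $P$. Then a subspace $W \subset V$ is invariant under $\mathrm{Aut}(V, B, P)$ if and only if $W = \bigoplus_\lambda (W \cap V^\lambda)$ and each $W \cap V^\lambda$ is an invariant subspace of $(V^\lambda, B|_{V^\lambda}, P|_{V^\lambda})$.
   Context: $P$ self-adjoint with respect to $B$ means $B(Pu, v) = B(u, Pv)$ for all $u, v$. $\mathrm{Aut}(V, B, P)$ is the group of linear automorphisms of $V$ preserving $B$ and commuting with $P$ (equivalently, preserving both $B$ and the form $A(u,v) = B(Pu,v)$); a subspace is invariant if it is preserved by this group. The generalized eigenspace for an eigenvalue $\lambda$ is $\operatorname{Ker}(P - \lambda E)^N$ for $N$ sufficiently large. In the real case, generalized eigenspaces are taken either for real eigenvalues $\lambda$, or for pairs of complex conjugate eigenvalues $\alpha \pm i\beta$, in which case the generalized eigenspace is $\operatorname{Ker}(P^2 - 2\alpha P + (\alpha^2+\beta^2)E)^N$ for large $N$. *)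

theory Defs
  imports "HOL-Analysis.Analysis"
begin

text \<open>The bilinear form on 'a^'n with Gram matrix G (no conjugation: bilinear, not sesquilinear).
Every bilinear form on a finite-dimensional coordinate space is of this shape.\<close>
definition bform :: "'a::field^'n^'n \<Rightarrow> 'a^'n \<Rightarrow> 'a^'n \<Rightarrow> 'a" where
  "bform G u v = (\<Sum>i\<in>UNIV. u $ i * (G *v v) $ i)"

definition symplectic :: "'a::field^'n^'n \<Rightarrow> bool" where
  "symplectic G \<longleftrightarrow> (\<forall>u. bform G u u = 0) \<and> (\<forall>u. (\<forall>v. bform G u v = 0) \<longrightarrow> u = 0)"

definition self_adjoint :: "'a::field^'n^'n \<Rightarrow> 'a^'n^'n \<Rightarrow> bool" where
  "self_adjoint G P \<longleftrightarrow> (\<forall>u v. bform G (P *v u) v = bform G u (P *v v))"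

definition aut_on :: "('a::field^'n) set \<Rightarrow> 'a^'n^'n \<Rightarrow> 'a^'n^'n \<Rightarrow> ('a^'n \<Rightarrow> 'a^'n) \<Rightarrow> bool" where
  "aut_on S G P g \<longleftrightarrow>
     (\<forall>u\<in>S. \<forall>v\<in>S. g (u + v) = g u + g v) \<and>
     (\<forall>c. \<forall>u\<in>S. g (c *s u) = c *s g u) \<and>
     bij_betw g S S \<and>
     (\<forall>u\<in>S. \<forall>v\<in>S. bform G (g u) (g v) = bform G u v) \<and>
     (\<forall>u\<in>S. g (P *v u) = P *v g u)"

definition aut_invariant :: "('a::field^'n) set \<Rightarrow> 'a^'n^'n \<Rightarrow> 'a^'n^'n \<Rightarrow> ('a^'n) set \<Rightarrow> bool" where
  "aut_invariant S G P W \<longleftrightarrow> (\<forall>g. aut_on S G P g \<longrightarrow> g ` W \<subseteq> W)"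

definition gen_eigenspace :: "'a::field^'n^'n \<Rightarrow> 'a \<Rightarrow> ('a^'n) set" where
  "gen_eigenspace P c = {v. \<exists>N. ((\<lambda>x. P *v x - c *s x) ^^ N) v = 0}"

text \<open>Real case, pair a \<plusminus> ib: Ker (P^2 - 2aP + (a^2+b^2)E)^N, N large.\<close>
definition gen_eigenspace_pair :: "real^'n^'n \<Rightarrow> real \<Rightarrow> real \<Rightarrow> (real^'n) set" where
  "gen_eigenspace_pair P a b =
     {v. \<exists>N. ((\<lambda>x. P *v (P *v x) - (2 * a) *s (P *v x) + (a^2 + b^2) *s x) ^^ N) v = 0}"

text \<open>The summands V^\<lambda> of the generalized eigenspace decomposition (the nonzero ones,
i.e. those belonging to actual eigenvalues / conjugate pairs of eigenvalues).\<close>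
definition gen_eigenspaces_complex :: "complex^'n^'n \<Rightarrow> (complex^'n) set set" where
  "gen_eigenspaces_complex P = {S. S \<noteq> {0} \<and> (\<exists>c. S = gen_eigenspace P c)}"

definition gen_eigenspaces_real :: "real^'n^'n \<Rightarrow> (real^'n) set set" where
  "gen_eigenspaces_real P = {S. S \<noteq> {0} \<and>
     ((\<exists>c. S = gen_eigenspace P c) \<or> (\<exists>a b. b > 0 \<and> S = gen_eigenspace_pair P a b))}"

end

theory Submission
  imports Defs "HOL-Computational_Algebra.Polynomial" "HOL-Computational_Algebra.Fundamental_Theorem_Algebra"
begin

abbreviation vlin :: "('a::field^'n \<Rightarrow> 'a^'n) \<Rightarrow> bool" where
  "vlin Q \<equiv> Vector_Spaces.linear ((*s)::'a \<Rightarrow> 'a^'n \<Rightarrow> 'a^'n) (*s) Q"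

lemma vlinI:
  fixes f :: "'a::field^'n \<Rightarrow> 'a^'n"
  assumes "\<And>x y. f (x + y) = f x + f y" "\<And>c x. f (c *s x) = c *s f x"
  shows "vlin f"
  using assms by (simp add: Vector_Spaces.linear_iff vec.vector_space_axioms)

definition Kset :: "('a::field^'n \<Rightarrow> 'a^'n) \<Rightarrow> ('a^'n) set" where
  "Kset Q = {v. \<exists>N. (Q^^N) v = 0}"

lemma vlin_funpow: "vlin Q \<Longrightarrow> vlin (Q^^N)"
  by (induction N) (auto simp: vec.linear_id intro: Vector_Spaces.linear_compose)

lemma funpow_zero_mono:
  assumes "vlin Q" "(Q^^N) v = 0" "N \<le> M"
  shows "(Q^^M) v = 0"
proof -
  have "M = (M - N) + N" using assms(3) by simp
  then have "(Q^^M) v = (Q^^(M-N)) ((Q^^N) v)" by (metis funpow_add o_apply)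
  also have "\<dots> = 0" using assms vlin_funpow[OF assms(1)] vec.linear_0 by (simp add: vec.linear_0)
  finally show ?thesis .
qed

lemma Kset_subspace:
  assumes "vlin Q" shows "vec.subspace (Kset Q)"
  unfolding vec.subspace_def
proof (intro conjI ballI allI)
  show "0 \<in> Kset Q" unfolding Kset_def by (auto intro: exI[of _ 0])
next
  fix x y assume "x \<in> Kset Q" "y \<in> Kset Q"
  then obtain N M where N: "(Q^^N) x = 0" and M: "(Q^^M) y = 0" unfolding Kset_def by auto
  have "(Q^^(max N M)) x = 0" "(Q^^(max N M)) y = 0"
    using funpow_zero_mono[OF assms N] funpow_zero_mono[OF assms M] by auto
  then have "(Q^^(max N M)) (x + y) = 0"
    using vec.linear_add[OF vlin_funpow[OF assms]] by simp
  then show "x + y \<in> Kset Q" unfolding Kset_def by blast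
next
  fix c x assume "x \<in> Kset Q"
  then obtain N where N: "(Q^^N) x = 0" unfolding Kset_def by auto
  then have "(Q^^N) (c *s x) = 0"
    using vec.linear_scale[OF vlin_funpow[OF assms]] by simp
  then show "c *s x \<in> Kset Q" unfolding Kset_def by blast
qed

lemma funpow_commute:
  assumes "\<And>x. g (Q x) = Q (g x)"
  shows "g ((Q^^N) x) = (Q^^N) (g x)"
  by (induction N) (auto simp: assms)

lemma Kset_invariant:
  assumes "vlin g" "\<And>x. g (Q x) = Q (g x)"
  shows "g ` Kset Q \<subseteq> Kset Q"
proof
  fix y assume "y \<in> g ` Kset Q"
  then obtain x N where "y = g x" "(Q^^N) x = 0" unfolding Kset_def by auto
  then have "(Q^^N) y = 0" using funpow_commute[of g Q, OF assms(2)] vec.linear_0[OF assms(1)]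
    by metis
  then show "y \<in> Kset Q" unfolding Kset_def by blast
qed

lemma inj_surj_subspace:
  assumes "vlin Q" "vec.subspace S" "Q ` S \<subseteq> S" "inj_on Q S"
  shows "Q ` S = S"
proof -
  have sp: "vec.span S = S" using assms(2) by (simp only: vec.span_eq_iff)
  have "inj_on Q (vec.span S)" unfolding sp by (rule assms(4))
  then have "vec.dim (Q ` S) = vec.dim S"
    by (rule vec.dim_image_eq[OF assms(1)])
  then have "vec.dim S \<le> vec.dim (Q ` S)" by (rule eq_refl[OF sym])
  then show ?thesis
    by (rule vec.subspace_dim_equal[OF vec.linear_subspace_image[OF assms(1,2)] assms(2,3)])
qed

lemma Kset_uniform:
  assumes "vlin Q"
  shows "\<exists>N. \<forall>v\<in>Kset Q. (Q^^N) v = 0"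
proof -
  obtain B where B: "B \<subseteq> Kset Q" "vec.independent B" "Kset Q \<subseteq> vec.span B"
    "card B = vec.dim (Kset Q)"
    by (rule vec.basis_exists[of "Kset Q"])
  have fin: "finite B" using vec.independent_bound_general[OF B(2)] by (rule conjunct1)
  have "\<forall>b\<in>B. \<exists>N. (Q^^N) b = 0" using B(1) unfolding Kset_def by auto
  then obtain Nf where Nf: "\<And>b. b \<in> B \<Longrightarrow> (Q^^(Nf b)) b = 0" by (rule bchoice[elim_format]) blast
  define N where "N = Max (Nf ` B)"
  have "\<And>b. b \<in> B \<Longrightarrow> (Q^^N) b = 0"
  proof -
    fix b assume b: "b \<in> B"
    have "Nf b \<le> N" unfolding N_def using fin b by simp
    then show "(Q^^N) b = 0" using funpow_zero_mono[OF assms Nf[OF b]] by blast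
  qed
  then have "B \<subseteq> {v. (Q^^N) v = 0}" by blast
  moreover have "vec.subspace {v. (Q^^N) v = 0}"
    by (rule vec.linear_subspace_kernel[OF vlin_funpow[OF assms]])
  ultimately have "vec.span B \<subseteq> {v. (Q^^N) v = 0}" by (rule vec.span_minimal)
  then show ?thesis using B(3) by blast
qed

lemma bform_add_left: "bform G (u + w) v = bform G u v + bform G w v"
  by (simp add: bform_def distrib_right sum.distrib)
lemma bform_add_right: "bform G u (v + w) = bform G u v + bform G u w"
  by (simp add: bform_def matrix_vector_right_distrib distrib_left sum.distrib)
lemma bform_scale_left: "bform G (c *s u) v = c * bform G u v"
  by (simp add: bform_def sum_distrib_left mult.assoc)
lemma bform_scale_right: "bform G u (c *s v) = c * bform G u v"
  by (simp add: bform_def vector_scalar_commute sum_distrib_left algebra_simps)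
lemma bform_neg_left: "bform G (- u) v = - bform G u v"
  by (simp add: bform_def sum_negf)
lemma bform_neg_right: "bform G u (- v) = - bform G u v"
  using bform_scale_right[of G u "-1" v] by (simp add: vec.scale_minus_left)
lemma bform_diff_left: "bform G (u - w) v = bform G u v - bform G w v"
  using bform_add_left[of G u "-w" v] bform_neg_left[of G w v] by simp
lemma bform_diff_right: "bform G u (v - w) = bform G u v - bform G u w"
  using bform_add_right[of G u v "-w"] bform_neg_right[of G u w] by simp


definition good_op :: "'a::field^'n^'n \<Rightarrow> 'a^'n^'n \<Rightarrow> ('a^'n \<Rightarrow> 'a^'n) \<Rightarrow> bool" where
  "good_op G P Q \<longleftrightarrow> vlin Q \<and> (\<forall>u v. bform G (Q u) v = bform G u (Q v)) \<and>
     (\<forall>g. vlin g \<and> (\<forall>u. g (P *v u) = P *v g u) \<longrightarrow> (\<forall>u. g (Q u) = Q (g u)))"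

lemma good_op_lin: "good_op G P Q \<Longrightarrow> vlin Q"
  unfolding good_op_def by blast

lemma good_op_sa: "good_op G P Q \<Longrightarrow> bform G (Q u) v = bform G u (Q v)"
  unfolding good_op_def by blast

lemma good_op_comm: "good_op G P Q \<Longrightarrow> vlin g \<Longrightarrow> (\<And>u. g (P *v u) = P *v g u) \<Longrightarrow> g (Q u) = Q (g u)"
  unfolding good_op_def by blast

lemma good_op_P: "good_op G P Q \<Longrightarrow> P *v (Q u) = Q (P *v u)"
  using good_op_comm[of G P Q "(*v) P"] by simp

lemma good_op_funpow_sa:
  assumes "good_op G P Q" shows "bform G ((Q^^n) u) v = bform G u ((Q^^n) v)"
proof (induction n arbitrary: u v)
  case 0 then show ?case by simp
next
  case (Suc n)
  have "bform G ((Q^^Suc n) u) v = bform G (Q ((Q^^n) u)) v" by simp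
  also have "\<dots> = bform G ((Q^^n) u) (Q v)" by (rule good_op_sa[OF assms])
  also have "\<dots> = bform G u ((Q^^n) (Q v))" by (rule Suc)
  also have "\<dots> = bform G u ((Q^^Suc n) v)" by (simp add: funpow_swap1)
  finally show ?case .
qed

lemma Kset_P_inv:
  assumes "good_op G P Q" "x \<in> Kset Q" shows "P *v x \<in> Kset Q"
proof -
  have "(*v) P ` Kset Q \<subseteq> Kset Q"
    by (rule Kset_invariant) (use good_op_P[OF assms(1)] in auto)
  then show ?thesis using assms(2) by blast
qed

definition TT :: "('a::field^'n) set set \<Rightarrow> ('a^'n) set \<Rightarrow> ('a^'n) set" where
  "TT F S = vec.span (\<Union>(F - {S}))"
definition dS :: "('a::field^'n) set set \<Rightarrow> ('a^'n) set \<Rightarrow> 'a^'n \<Rightarrow> 'a^'n" where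
  "dS F S w = (SOME s. s \<in> S \<and> w - s \<in> TT F S)"
definition ext :: "('a::field^'n) set set \<Rightarrow> ('a^'n) set \<Rightarrow> ('a^'n \<Rightarrow> 'a^'n) \<Rightarrow> 'a^'n \<Rightarrow> 'a^'n" where
  "ext F S h w = h (dS F S w) + (w - dS F S w)"

context
  fixes G :: "'a::field_char_0^'n^'n" and P :: "'a^'n^'n" and F :: "('a^'n) set set"
    and S :: "('a^'n) set" and Q :: "'a^'n \<Rightarrow> 'a^'n"
  assumes gQ: "good_op G P Q" and SK: "S = Kset Q" and SF: "S \<in> F"
    and injF: "\<And>S'. S' \<in> F \<Longrightarrow> S' \<noteq> S \<Longrightarrow> inj_on Q S'"
    and Fsub: "\<And>S'. S' \<in> F \<Longrightarrow> \<exists>Q'. good_op G P Q' \<and> S' = Kset Q'"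
    and spanF: "vec.span (\<Union>F) = UNIV"
begin


lemma Qlin: "vlin Q" using gQ by (rule good_op_lin)

lemma S_sub: "vec.subspace S" unfolding SK by (rule Kset_subspace[OF Qlin])
lemma T_sub: "vec.subspace (TT F S)" unfolding TT_def by simp

lemma Qpow_surj_other:
  assumes "S' \<in> F" "S' \<noteq> S" shows "(Q^^N) ` S' = S'"
proof -
  obtain Q' where Q': "good_op G P Q'" "S' = Kset Q'" using Fsub[OF assms(1)] by blast
  have comm: "\<And>u. Q (Q' u) = Q' (Q u)"
    by (rule good_op_comm[OF Q'(1) Qlin]) (simp add: good_op_P[OF gQ])
  have inv: "Q ` S' \<subseteq> S'" unfolding Q'(2) by (rule Kset_invariant[of Q Q', OF Qlin comm])
  have surj: "Q ` S' = S'"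
    by (rule inj_surj_subspace[OF Qlin _ inv injF[OF assms]])
       (simp add: Q'(2) Kset_subspace[OF good_op_lin[OF Q'(1)]])
  show ?thesis
  proof (induction N)
    case 0 then show ?case by simp
  next
    case (Suc N)
    have "(Q^^Suc N) ` S' = Q ` ((Q^^N) ` S')" by (simp add: image_comp)
    then show ?case using Suc surj by simp
  qed
qed

lemma T_range: "TT F S \<subseteq> range (Q^^N)"
proof -
  have "\<Union>(F - {S}) \<subseteq> range (Q^^N)"
  proof
    fix x assume "x \<in> \<Union>(F - {S})"
    then obtain S' where "S' \<in> F" "S' \<noteq> S" "x \<in> S'" by blast
    then show "x \<in> range (Q^^N)" using Qpow_surj_other[of S' N] by blast
  qed
  moreover have "vec.subspace (range (Q^^N))"
    by (rule vec.linear_subspace_image[OF vlin_funpow[OF Qlin] vec.subspace_UNIV])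
  ultimately show ?thesis unfolding TT_def by (rule vec.span_minimal)
qed

lemma ST_zero: assumes "x \<in> S" "x \<in> TT F S" shows "x = 0"
proof -
  obtain N where N: "\<And>v. v \<in> Kset Q \<Longrightarrow> (Q^^N) v = 0" using Kset_uniform[OF Qlin] by blast
  obtain y where y: "x = (Q^^N) y" using T_range[of N] assms(2) by blast
  have "(Q^^N) x = 0" using N assms(1) SK by blast
  then have "(Q^^(N+N)) y = 0" using y by (simp add: funpow_add)
  then have "y \<in> Kset Q" unfolding Kset_def by blast
  then show ?thesis using N y by simp
qed

lemma decomp_ex: "\<exists>s t. s \<in> S \<and> t \<in> TT F S \<and> w = s + t"
proof -
  have "\<Union>F = S \<union> \<Union>(F - {S})" using SF by blast
  then have "w \<in> vec.span (S \<union> \<Union>(F - {S}))" using spanF by simp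
  then obtain a b where "a \<in> vec.span S" "b \<in> TT F S" "w = a + b"
    unfolding vec.span_Un TT_def by blast
  moreover have "vec.span S = S" using S_sub by (simp only: vec.span_eq_iff)
  ultimately show ?thesis by blast
qed

lemma decomp_unique:
  assumes "s \<in> S" "t \<in> TT F S" "s' \<in> S" "t' \<in> TT F S" "s + t = s' + t'"
  shows "s = s' \<and> t = t'"
proof -
  have "s - s' = t' - t" using assms(5) by (simp add: algebra_simps)
  moreover have "s - s' \<in> S" using S_sub assms(1,3) by (rule vec.subspace_diff)
  moreover have "t' - t \<in> TT F S" using T_sub assms(4,2) by (rule vec.subspace_diff)
  ultimately have "s - s' = 0" using ST_zero by metis
  then show ?thesis using assms(5) by simp
qed

lemma orth: assumes "s \<in> S" "t \<in> TT F S" shows "bform G s t = 0" "bform G t s = 0"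
proof -
  obtain N where N: "\<And>v. v \<in> Kset Q \<Longrightarrow> (Q^^N) v = 0" using Kset_uniform[OF Qlin] by blast
  obtain y where y: "t = (Q^^N) y" using T_range[of N] assms(2) by blast
  have s0: "(Q^^N) s = 0" using N assms(1) SK by blast
  have "bform G s t = bform G ((Q^^N) s) y" unfolding y by (simp add: good_op_funpow_sa[OF gQ])
  also have "\<dots> = 0" by (simp add: s0 bform_def)
  finally show "bform G s t = 0" .
  have "bform G t s = bform G y ((Q^^N) s)" unfolding y by (simp add: good_op_funpow_sa[OF gQ])
  also have "\<dots> = 0" by (simp add: s0 bform_def)
  finally show "bform G t s = 0" .
qed

lemma P_S: "x \<in> S \<Longrightarrow> P *v x \<in> S" unfolding SK by (rule Kset_P_inv[OF gQ])

lemma P_T: assumes "x \<in> TT F S" shows "P *v x \<in> TT F S"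
proof -
  have "(*v) P ` (\<Union>(F - {S})) \<subseteq> \<Union>(F - {S})"
  proof
    fix y assume "y \<in> (*v) P ` (\<Union>(F - {S}))"
    then obtain S' x where "S' \<in> F" "S' \<noteq> S" "x \<in> S'" "y = P *v x" by blast
    moreover obtain Q' where "good_op G P Q'" "S' = Kset Q'" using Fsub[OF \<open>S' \<in> F\<close>] by blast
    ultimately show "y \<in> \<Union>(F - {S})" using Kset_P_inv by blast
  qed
  then have "(*v) P ` TT F S \<subseteq> TT F S"
  proof -
    have "(*v) P ` TT F S \<subseteq> vec.span ((*v) P ` (\<Union>(F - {S})))" unfolding TT_def
      by (rule vec.linear_spans_image[OF matrix_vector_mul_linear_gen]) simp
    also have "\<dots> \<subseteq> TT F S" unfolding TT_def by (rule vec.span_mono) fact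
    finally show ?thesis .
  qed
  then show ?thesis using assms by blast
qed


lemma dS: "dS F S w \<in> S" "w - dS F S w \<in> TT F S"
proof -
  obtain s t where "s \<in> S" "t \<in> TT F S" "w = s + t" using decomp_ex by blast
  then have "\<exists>s. s \<in> S \<and> w - s \<in> TT F S" by (intro exI[of _ s]) simp
  then have "dS F S w \<in> S \<and> w - dS F S w \<in> TT F S" unfolding dS_def by (rule someI_ex)
  then show "dS F S w \<in> S" "w - dS F S w \<in> TT F S" by auto
qed

lemma dS_eq: assumes "s \<in> S" "t \<in> TT F S" shows "dS F S (s + t) = s"
proof -
  have "dS F S (s + t) + (s + t - dS F S (s + t)) = s + t" by simp
  then show ?thesis using decomp_unique[OF dS(1) dS(2) assms] by metis
qed


lemma ext_S: "x \<in> S \<Longrightarrow> ext F S h x = h x"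
  unfolding ext_def using dS_eq[of x 0] vec.subspace_0[OF T_sub] by simp

lemma ext_aut:
  assumes h: "aut_on S G P h"
  shows "aut_on UNIV G P (ext F S h)"
proof -
  note hh = h[unfolded aut_on_def]
  have hadd: "\<And>u v. u \<in> S \<Longrightarrow> v \<in> S \<Longrightarrow> h (u + v) = h u + h v"
    using conjunct1[OF hh] by simp
  have hsc: "\<And>c u. u \<in> S \<Longrightarrow> h (c *s u) = c *s h u"
    using conjunct1[OF conjunct2[OF hh]] by simp
  have hbij: "bij_betw h S S"
    using conjunct1[OF conjunct2[OF conjunct2[OF hh]]] by simp
  have hB: "\<And>u v. u \<in> S \<Longrightarrow> v \<in> S \<Longrightarrow> bform G (h u) (h v) = bform G u v"
    using conjunct1[OF conjunct2[OF conjunct2[OF conjunct2[OF hh]]]] by simp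
  have hP: "\<And>u. u \<in> S \<Longrightarrow> h (P *v u) = P *v h u"
    using conjunct2[OF conjunct2[OF conjunct2[OF conjunct2[OF hh]]]] by simp
  have hS: "\<And>u. u \<in> S \<Longrightarrow> h u \<in> S" by (rule bij_betw_apply[OF hbij])
  have dec: "\<And>w. w = dS F S w + (w - dS F S w)" by simp
  have add: "ext F S h (u + v) = ext F S h u + ext F S h v" for u v
  proof -
    have "u + v = (dS F S u + dS F S v) + ((u - dS F S u) + (v - dS F S v))" by (simp add: algebra_simps)
    then have "dS F S (u + v) = dS F S u + dS F S v"
      using dS_eq[of "dS F S u + dS F S v" "(u - dS F S u) + (v - dS F S v)"] dS
        vec.subspace_add[OF S_sub] vec.subspace_add[OF T_sub] by metis
    then show ?thesis unfolding ext_def using hadd[OF dS(1) dS(1)] by (simp add: algebra_simps)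
  qed
  have sc: "ext F S h (c *s u) = c *s ext F S h u" for c u
  proof -
    have "c *s u = c *s dS F S u + c *s (u - dS F S u)" by (simp add: vec.scale_right_distrib[symmetric])
    then have "dS F S (c *s u) = c *s dS F S u"
      using dS_eq[of "c *s dS F S u" "c *s (u - dS F S u)"] dS
        vec.subspace_scale[OF S_sub] vec.subspace_scale[OF T_sub] by metis
    then show ?thesis unfolding ext_def using hsc[OF dS(1)]
      by (simp add: vec.scale_right_distrib vec.scale_right_diff_distrib)
  qed
  have inj: "inj (ext F S h)"
  proof (rule injI)
    fix u v assume "ext F S h u = ext F S h v"
    then have "h (dS F S u) + (u - dS F S u) = h (dS F S v) + (v - dS F S v)" unfolding ext_def .
    then have "h (dS F S u) = h (dS F S v) \<and> u - dS F S u = v - dS F S v"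
      using decomp_unique[OF hS[OF dS(1)] dS(2) hS[OF dS(1)] dS(2)] by blast
    moreover have "inj_on h S" using hbij bij_betw_def by blast
    ultimately have "dS F S u = dS F S v" "u - dS F S u = v - dS F S v" using dS(1) inj_on_def by metis+
    then show "u = v" by (metis diff_add_cancel)
  qed
  have surj: "surj (ext F S h)"
  proof -
    have "w \<in> range (ext F S h)" for w
    proof -
      have "dS F S w \<in> h ` S" using hbij dS(1) bij_betw_imp_surj_on by metis
      then obtain s1 where s1: "s1 \<in> S" "h s1 = dS F S w" by (metis imageE)
      have "ext F S h (s1 + (w - dS F S w)) = h s1 + (w - dS F S w)"
        unfolding ext_def using dS_eq[OF s1(1) dS(2)] by simp
      then show ?thesis using s1 by (metis diff_add_cancel add.commute rangeI)
    qed
    then show ?thesis by blast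
  qed
  have B: "bform G (ext F S h u) (ext F S h v) = bform G u v" for u v
  proof -
    define su sv tu tv where "su = dS F S u" "sv = dS F S v" "tu = u - dS F S u" "tv = v - dS F S v"
    have m: "su \<in> S" "sv \<in> S" "tu \<in> TT F S" "tv \<in> TT F S" unfolding su_sv_tu_tv_def using dS by auto
    have e: "ext F S h u = h su + tu" "ext F S h v = h sv + tv" "u = su + tu" "v = sv + tv"
      unfolding ext_def su_sv_tu_tv_def by simp_all
    have "bform G (ext F S h u) (ext F S h v) = bform G (h su) (h sv) + bform G (h su) tv + bform G tu (h sv) + bform G tu tv"
      unfolding e(1,2) by (simp add: bform_add_left bform_add_right)
    also have "\<dots> = bform G su sv + bform G tu tv"
      using orth[OF hS[OF m(1)] m(4)] orth[OF hS[OF m(2)] m(3)] hB[OF m(1,2)] by simp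
    also have "\<dots> = bform G u v"
      unfolding e(3,4) using orth[OF m(1) m(4)] orth[OF m(2) m(3)] by (simp add: bform_add_left bform_add_right)
    finally show ?thesis .
  qed
  have PC: "ext F S h (P *v u) = P *v ext F S h u" for u
  proof -
    have "P *v u = P *v dS F S u + P *v (u - dS F S u)" by (simp add: matrix_vector_right_distrib[symmetric])
    then have "dS F S (P *v u) = P *v dS F S u" using dS_eq[OF P_S[OF dS(1)] P_T[OF dS(2)]] by metis
    then show ?thesis unfolding ext_def using hP[OF dS(1)]
      by (simp add: matrix_vector_right_distrib matrix_vector_mult_diff_distrib)
  qed
  show ?thesis unfolding aut_on_def using add sc inj surj B PC by (simp add: bij_def)
qed

lemma proj_in_W:
  assumes inv: "aut_invariant UNIV G P W" and W: "vec.subspace W" and w: "w \<in> W"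
  shows "dS F S w \<in> W"
proof -
  have "aut_on S G P uminus"
    unfolding aut_on_def
  proof (intro conjI ballI allI)
    show "bij_betw uminus S S"
      unfolding bij_betw_def inj_on_def
      using vec.subspace_neg[OF S_sub] by (auto intro!: image_eqI[where x="- _"])
  qed (auto simp: bform_neg_left bform_neg_right vec.scale_minus_right vec.neg)
  then have "aut_on UNIV G P (ext F S uminus)" by (rule ext_aut)
  then have "ext F S uminus w \<in> W" using inv w unfolding aut_invariant_def by blast
  then have "w - ext F S uminus w \<in> W" using W w vec.subspace_diff by blast
  moreover have "w - ext F S uminus w = dS F S w + dS F S w" unfolding ext_def by (simp add: algebra_simps)
  ultimately have "(1/2::'a) *s (dS F S w + dS F S w) \<in> W" using W vec.subspace_scale by metis
  moreover have "(1/2::'a) *s (dS F S w + dS F S w) = dS F S w"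
  proof -
    have "(1/2::'a) *s (dS F S w + dS F S w) = ((1/2) + (1/2)) *s dS F S w"
      by (simp only: vec.scale_right_distrib vec.scale_left_distrib)
    also have "\<dots> = dS F S w" by simp
    finally show ?thesis .
  qed
  ultimately show ?thesis by simp
qed

end


lemma span_rep:
  fixes F :: "('a::field^'n) set set"
  assumes sub: "\<And>S. S \<in> F \<Longrightarrow> vec.subspace S" and w: "w \<in> vec.span (\<Union>F)"
  shows "\<exists>SS x. finite SS \<and> SS \<subseteq> F \<and> (\<forall>S\<in>SS. x S \<in> S) \<and> w = (\<Sum>S\<in>SS. x S)"
  using w
proof (rule vec.span_induct_alt)
  show "\<exists>SS x. finite SS \<and> SS \<subseteq> F \<and> (\<forall>S\<in>SS. x S \<in> S) \<and> 0 = (\<Sum>S\<in>SS. x S)"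
    by (rule exI[of _ "{}"]) simp
next
  fix c z y
  assume z: "z \<in> \<Union>F" and "\<exists>SS x. finite SS \<and> SS \<subseteq> F \<and> (\<forall>S\<in>SS. x S \<in> S) \<and> y = (\<Sum>S\<in>SS. x S)"
  then obtain SS x where IH: "finite SS" "SS \<subseteq> F" "\<forall>S\<in>SS. x S \<in> S" "y = (\<Sum>S\<in>SS. x S)"
    by blast
  obtain S0 where S0: "S0 \<in> F" "z \<in> S0" using z by blast
  define x' where "x' = x(S0 := c *s z + (if S0 \<in> SS then x S0 else 0))"
  have mem: "\<forall>S\<in>insert S0 SS. x' S \<in> S"
  proof
    fix S assume "S \<in> insert S0 SS"
    show "x' S \<in> S"
    proof (cases "S = S0")
      case True
      have "c *s z \<in> S0" using vec.subspace_scale[OF sub[OF S0(1)] S0(2)] .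
      moreover have "(if S0 \<in> SS then x S0 else 0) \<in> S0"
        using IH(3) vec.subspace_0[OF sub[OF S0(1)]] by simp
      ultimately show ?thesis using True vec.subspace_add[OF sub[OF S0(1)]] unfolding x'_def by simp
    next
      case False
      then show ?thesis using \<open>S \<in> insert S0 SS\<close> IH(3) unfolding x'_def by simp
    qed
  qed
  have sum: "c *s z + y = (\<Sum>S\<in>insert S0 SS. x' S)"
  proof (cases "S0 \<in> SS")
    case True
    have "(\<Sum>S\<in>insert S0 SS. x' S) = x' S0 + (\<Sum>S\<in>SS - {S0}. x' S)"
      using True IH(1) by (simp add: insert_absorb sum.remove)
    also have "(\<Sum>S\<in>SS - {S0}. x' S) = (\<Sum>S\<in>SS - {S0}. x S)"
      unfolding x'_def by (rule sum.cong) auto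
    also have "x' S0 = c *s z + x S0" unfolding x'_def using True by simp
    finally have "(\<Sum>S\<in>insert S0 SS. x' S) = c *s z + (x S0 + (\<Sum>S\<in>SS - {S0}. x S))"
      by (simp add: add.assoc)
    also have "x S0 + (\<Sum>S\<in>SS - {S0}. x S) = y" using IH(1,4) True by (simp add: sum.remove)
    finally show ?thesis by simp
  next
    case False
    have "(\<Sum>S\<in>insert S0 SS. x' S) = x' S0 + (\<Sum>S\<in>SS. x' S)"
      using False IH(1) by simp
    also have "(\<Sum>S\<in>SS. x' S) = (\<Sum>S\<in>SS. x S)"
      unfolding x'_def using False by (intro sum.cong) auto
    also have "x' S0 = c *s z" unfolding x'_def using False by simp
    finally show ?thesis using IH(4) by simp
  qed
  show "\<exists>SS x. finite SS \<and> SS \<subseteq> F \<and> (\<forall>S\<in>SS. x S \<in> S) \<and> c *s z + y = (\<Sum>S\<in>SS. x S)"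
    by (rule exI[of _ "insert S0 SS"], rule exI[of _ x'])
       (use IH(1,2) S0(1) mem sum in auto)
qed

definition good_family :: "'a::field^'n^'n \<Rightarrow> 'a^'n^'n \<Rightarrow> ('a^'n) set set \<Rightarrow> bool" where
  "good_family G P F \<longleftrightarrow>
     (\<forall>S\<in>F. \<exists>Q. good_op G P Q \<and> S = Kset Q \<and> (\<forall>S'\<in>F. S' \<noteq> S \<longrightarrow> inj_on Q S')) \<and>
     vec.span (\<Union>F) = UNIV"

lemma abstract_main:
  fixes G :: "'a::field_char_0^'n^'n"
  assumes fam: "good_family G P F" and W: "vec.subspace W"
  shows "aut_invariant UNIV G P W \<longleftrightarrow>
           W = vec.span (\<Union>S\<in>F. W \<inter> S) \<and> (\<forall>S\<in>F. aut_invariant S G P (W \<inter> S))"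
proof -
  have Fq: "\<And>S. S \<in> F \<Longrightarrow> \<exists>Q. good_op G P Q \<and> S = Kset Q \<and> (\<forall>S'\<in>F. S' \<noteq> S \<longrightarrow> inj_on Q S')"
    using fam unfolding good_family_def by blast
  have spanF: "vec.span (\<Union>F) = UNIV" using fam unfolding good_family_def by blast
  have Fsub: "\<And>S'. S' \<in> F \<Longrightarrow> \<exists>Q'. good_op G P Q' \<and> S' = Kset Q'" using Fq by blast
  have Fss: "\<And>S. S \<in> F \<Longrightarrow> vec.subspace S"
    using Fsub Kset_subspace good_op_lin by metis
  have span_le: "vec.span (\<Union>S\<in>F. W \<inter> S) \<subseteq> W"
    by (rule vec.span_minimal[OF _ W]) blast
  show ?thesis
  proof
    assume inv: "aut_invariant UNIV G P W"
    have part2: "\<forall>S\<in>F. aut_invariant S G P (W \<inter> S)"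
    proof
      fix S assume SF: "S \<in> F"
      obtain Q where Q: "good_op G P Q" "S = Kset Q" "\<And>S'. S' \<in> F \<Longrightarrow> S' \<noteq> S \<Longrightarrow> inj_on Q S'"
        using Fq[OF SF] by blast
      show "aut_invariant S G P (W \<inter> S)"
        unfolding aut_invariant_def
      proof (intro allI impI)
        fix h assume h: "aut_on S G P h"
        have g: "aut_on UNIV G P (ext F S h)"
          by (rule ext_aut[OF Q(1,2) SF Q(3) Fsub spanF h])
        have "ext F S h ` W \<subseteq> W" using inv g unfolding aut_invariant_def by blast
        moreover have "\<And>x. x \<in> S \<Longrightarrow> ext F S h x = h x"
          by (rule ext_S[OF Q(1,2) SF Q(3) Fsub spanF])
        moreover have "h ` S \<subseteq> S" using h unfolding aut_on_def bij_betw_def by blast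
        ultimately show "h ` (W \<inter> S) \<subseteq> W \<inter> S" by force
      qed
    qed
    have "W \<subseteq> vec.span (\<Union>S\<in>F. W \<inter> S)"
    proof
      fix w assume w: "w \<in> W"
      have "w \<in> vec.span (\<Union>F)" using spanF by simp
      then have "\<exists>SS x. finite SS \<and> SS \<subseteq> F \<and> (\<forall>S\<in>SS. x S \<in> S) \<and> w = (\<Sum>S\<in>SS. x S)"
        by (rule span_rep[rotated]) (rule Fss)
      then obtain SS x where rep: "finite SS" "SS \<subseteq> F" "\<forall>S\<in>SS. x S \<in> S" "w = (\<Sum>S\<in>SS. x S)"
        by blast
      have "x S0 \<in> W" if S0: "S0 \<in> SS" for S0
      proof -
        have S0F: "S0 \<in> F" using S0 rep(2) by blast
        obtain Q where Q: "good_op G P Q" "S0 = Kset Q" "\<And>S'. S' \<in> F \<Longrightarrow> S' \<noteq> S0 \<Longrightarrow> inj_on Q S'"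
          using Fq[OF S0F] by blast
        have rest: "(\<Sum>S\<in>SS - {S0}. x S) \<in> TT F S0"
          unfolding TT_def
        proof (rule vec.span_sum)
          fix S assume "S \<in> SS - {S0}"
          then have "x S \<in> \<Union>(F - {S0})" using rep(2,3) by blast
          then show "x S \<in> vec.span (\<Union>(F - {S0}))" by (rule vec.span_base)
        qed
        have "w = x S0 + (\<Sum>S\<in>SS - {S0}. x S)" using rep(1,4) S0 by (simp add: sum.remove)
        then have "dS F S0 w = x S0"
          using dS_eq[OF Q(1,2) S0F Q(3) Fsub spanF _ rest] rep(3) S0 by simp
        moreover have "dS F S0 w \<in> W"
          by (rule proj_in_W[OF Q(1,2) S0F Q(3) Fsub spanF inv W w])
        ultimately show ?thesis by simp
      qed
      then have "\<And>S. S \<in> SS \<Longrightarrow> x S \<in> vec.span (\<Union>S\<in>F. W \<inter> S)"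
        using rep(2,3) by (intro vec.span_base) blast
      then show "w \<in> vec.span (\<Union>S\<in>F. W \<inter> S)" unfolding rep(4) by (rule vec.span_sum)
    qed
    then show "W = vec.span (\<Union>S\<in>F. W \<inter> S) \<and> (\<forall>S\<in>F. aut_invariant S G P (W \<inter> S))"
      using span_le part2 by blast
  next
    assume rhs: "W = vec.span (\<Union>S\<in>F. W \<inter> S) \<and> (\<forall>S\<in>F. aut_invariant S G P (W \<inter> S))"
    show "aut_invariant UNIV G P W"
      unfolding aut_invariant_def
    proof (intro allI impI)
      fix g assume g: "aut_on UNIV G P g"
      have gadd: "\<And>u v. g (u + v) = g u + g v" and gsc: "\<And>c u. g (c *s u) = c *s g u"
        and gbij: "bij g" and gB: "\<And>u v. bform G (g u) (g v) = bform G u v"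
        and gP: "\<And>u. g (P *v u) = P *v g u"
        using g unfolding aut_on_def bij_def by simp_all
      have glin: "vlin g" by (rule vlinI[OF gadd gsc])
      have piece: "g ` (W \<inter> S) \<subseteq> W \<inter> S" if SF: "S \<in> F" for S
      proof -
        obtain Q where Q: "good_op G P Q" "S = Kset Q" using Fsub[OF SF] by blast
        have comm: "\<And>u. g (Q u) = Q (g u)" by (rule good_op_comm[OF Q(1) glin gP])
        have inv: "g ` S \<subseteq> S" unfolding Q(2) by (rule Kset_invariant[of g Q, OF glin comm])
        have injS: "inj_on g S" by (rule inj_on_subset[OF bij_is_inj[OF gbij] subset_UNIV])
        have "g ` S = S" by (rule inj_surj_subspace[OF glin Fss[OF SF] inv injS])
        then have "aut_on S G P g"
          unfolding aut_on_def bij_betw_def using gadd gsc gB gP injS by simp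
        moreover have "aut_invariant S G P (W \<inter> S)" using rhs SF by blast
        ultimately show ?thesis unfolding aut_invariant_def by blast
      qed
      have "g ` W = g ` vec.span (\<Union>S\<in>F. W \<inter> S)" using rhs by simp
      also have "\<dots> \<subseteq> vec.span (g ` (\<Union>S\<in>F. W \<inter> S))"
        by (rule vec.linear_spans_image[OF glin]) simp
      also have "\<dots> \<subseteq> vec.span (\<Union>S\<in>F. W \<inter> S)"
        by (rule vec.span_mono) (use piece in blast)
      also have "\<dots> = W" using rhs by simp
      finally show "g ` W \<subseteq> W" .
    qed
  qed
qed


definition evalP :: "('a::field^'n \<Rightarrow> 'a^'n) \<Rightarrow> 'a poly \<Rightarrow> 'a^'n \<Rightarrow> 'a^'n" where
  "evalP L p v = (\<Sum>i\<le>degree p. coeff p i *s (L^^i) v)"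

lemma evalP_bound:
  assumes "degree p \<le> M"
  shows "evalP L p v = (\<Sum>i\<le>M. coeff p i *s (L^^i) v)"
  unfolding evalP_def
proof (rule sum.mono_neutral_left)
  show "\<forall>i\<in>{..M} - {..degree p}. coeff p i *s (L ^^ i) v = 0"
    by (auto simp: coeff_eq_0)
qed (use assms in auto)

lemma evalP_add: "evalP L (p + q) v = evalP L p v + evalP L q v"
proof -
  define M where "M = max (degree p) (degree q)"
  have "degree (p + q) \<le> M" "degree p \<le> M" "degree q \<le> M"
    unfolding M_def using degree_add_le_max[of p q] by auto
  then show ?thesis
    by (simp add: evalP_bound[of _ M] vec.scale_left_distrib sum.distrib)
qed

lemma evalP_smult: "evalP L (smult a p) v = a *s evalP L p v"
proof -
  have "degree (smult a p) \<le> degree p" by (rule degree_smult_le)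
  then show ?thesis
    by (simp add: evalP_bound[of _ "degree p"] vec.scale_sum_right vec.scale_scale)
qed

lemma evalP_0: "evalP L 0 v = 0"
  by (simp add: evalP_def)

lemma evalP_pCons:
  assumes L: "vlin L"
  shows "evalP L (pCons a p) v = a *s v + L (evalP L p v)"
proof -
  have "degree (pCons a p) \<le> Suc (degree p)" by (rule degree_pCons_le)
  then have "evalP L (pCons a p) v = (\<Sum>i\<le>Suc (degree p). coeff (pCons a p) i *s (L^^i) v)"
    by (rule evalP_bound)
  also have "\<dots> = a *s v + (\<Sum>i\<le>degree p. coeff p i *s (L^^Suc i) v)"
    unfolding sum.atMost_Suc_shift by simp
  also have "(\<Sum>i\<le>degree p. coeff p i *s (L^^Suc i) v) = L (evalP L p v)"
    unfolding evalP_def by (simp add: vec.linear_sum[OF L] vec.linear_scale[OF L])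
  finally show ?thesis .
qed

lemma evalP_mult:
  assumes L: "vlin L"
  shows "evalP L (p * q) v = evalP L p (evalP L q v)"
proof (induction p rule: pCons_induct)
  show "evalP L (0 * q) v = evalP L 0 (evalP L q v)" by (simp add: evalP_0)
next
  fix a p assume IH: "evalP L (p * q) v = evalP L p (evalP L q v)"
  have "evalP L (pCons a p * q) v = evalP L (smult a q + pCons 0 (p * q)) v" by simp
  also have "\<dots> = a *s evalP L q v + L (evalP L (p * q) v)"
    by (simp add: evalP_add evalP_smult evalP_pCons[OF L])
  also have "\<dots> = evalP L (pCons a p) (evalP L q v)"
    using IH by (simp add: evalP_pCons[OF L])
  finally show "evalP L (pCons a p * q) v = evalP L (pCons a p) (evalP L q v)" .
qed

lemma evalP_const: "evalP L [:c:] v = c *s v"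
  by (simp add: evalP_def)

lemma evalP_lin:
  assumes L: "vlin L" shows "evalP L [:-c, 1:] v = L v - c *s v"
  by (simp add: evalP_pCons[OF L] evalP_const vec.scale_minus_left)

lemma evalP_quad:
  assumes L: "vlin L" shows "evalP L [:k, -m, 1:] v = L (L v) - m *s L v + k *s v"
  by (simp add: evalP_pCons[OF L] evalP_const vec.linear_add[OF L] vec.linear_scale[OF L]
      vec.linear_diff[OF L] vec.scale_minus_left algebra_simps)

lemma evalP_sum_monom:
  "evalP L (\<Sum>i\<le>n. monom (c i) i) v = (\<Sum>i\<le>n. c i *s (L^^i) v)"
proof -
  have "degree (\<Sum>i\<le>n. monom (c i) i) \<le> n"
    by (rule degree_sum_le) (auto intro: order.trans[OF degree_monom_le])
  then show ?thesis by (simp add: evalP_bound[of _ n] coeff_sum_monom)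
qed

lemma annihilating:
  fixes L :: "'a::field^'n \<Rightarrow> 'a^'n"
  shows "\<exists>p. p \<noteq> 0 \<and> evalP L p v = 0"
proof -
  define n where "n = vec.dim (UNIV :: ('a^'n) set)"
  define f where "f i = (L^^i) v" for i
  show ?thesis
  proof (cases "inj_on f {..n}")
    case True
    define A where "A = f ` {..n}"
    have finA: "finite A" unfolding A_def by simp
    have cardA: "card A = Suc n" unfolding A_def using card_image[OF True] by simp
    have "vec.dim A \<le> n" unfolding n_def by (rule vec.dim_subset) simp
    then have "vec.dependent A" using cardA by (intro vec.dependent_biggerset_general) simp
    then obtain u where u: "\<exists>w\<in>A. u w \<noteq> 0" "(\<Sum>w\<in>A. u w *s w) = 0"
      using vec.dependent_finite[OF finA] by blast
    define p where "p = (\<Sum>i\<le>n. monom (u (f i)) i)"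
    have "evalP L p v = (\<Sum>i\<le>n. u (f i) *s f i)"
      unfolding p_def evalP_sum_monom f_def by simp
    also have "\<dots> = (\<Sum>w\<in>A. u w *s w)"
      unfolding A_def sum.reindex[OF True] by simp
    finally have ev: "evalP L p v = 0" using u(2) by simp
    obtain i where i: "i \<le> n" "u (f i) \<noteq> 0" using u(1) unfolding A_def by auto
    have "coeff p i \<noteq> 0" unfolding p_def using i by (simp add: coeff_sum_monom)
    then have "p \<noteq> 0" by auto
    then show ?thesis using ev by blast
  next
    case False
    then obtain i j where ij: "i \<le> n" "j \<le> n" "i \<noteq> j" "f i = f j"
      unfolding inj_on_def by auto
    define c where "c k = (if k = i then (1::'a) else 0) - (if k = j then 1 else 0)" for k
    define p where "p = (\<Sum>k\<le>n. monom (c k) k)"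
    have "evalP L p v = (\<Sum>k\<le>n. c k *s f k)"
      unfolding p_def evalP_sum_monom f_def by simp
    also have "\<dots> = (\<Sum>k\<le>n. (if k = i then f k else 0)) - (\<Sum>k\<le>n. (if k = j then f k else 0))"
    proof -
      have "\<And>k. c k *s f k = (if k = i then f k else 0) - (if k = j then f k else 0)"
        unfolding c_def by (simp add: vec.scale_left_diff_distrib)
      then show ?thesis by (simp only: sum_subtractf)
    qed
    also have "\<dots> = 0" using ij by simp
    finally have ev: "evalP L p v = 0" .
    have "coeff p i \<noteq> 0" unfolding p_def using ij by (simp add: coeff_sum_monom c_def)
    then have "p \<noteq> 0" by auto
    then show ?thesis using ev by blast
  qed
qed

lemma lift:
  fixes R :: "'a::field^'n \<Rightarrow> 'a^'n" and F :: "('a^'n) set set"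
  assumes R: "vlin R"
    and fam: "\<And>E. E \<in> F \<Longrightarrow> vec.subspace E \<and> R ` E \<subseteq> E \<and> (inj_on R E \<or> E = Kset R)"
    and KR: "Kset R \<subseteq> vec.span (\<Union>F)"
    and Rv: "R v \<in> vec.span (\<Union>F)"
  shows "v \<in> vec.span (\<Union>F)"
proof -
  define M where "M = {a + b | a b. a \<in> R ` vec.span (\<Union>F) \<and> b \<in> Kset R}"
  have Msub: "vec.subspace M" unfolding M_def
    by (rule vec.subspace_sums[OF vec.linear_subspace_image[OF R vec.subspace_span] Kset_subspace[OF R]])
  have "\<Union>F \<subseteq> M"
  proof
    fix x assume "x \<in> \<Union>F"
    then obtain E where E: "E \<in> F" "x \<in> E" by blast
    note fE = fam[OF E(1)]
    show "x \<in> M"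
    proof (cases "inj_on R E")
      case True
      have "R ` E = E" using inj_surj_subspace[OF R _ _ True] fE by blast
      then obtain y where "y \<in> E" "x = R y" using E(2) by (metis imageE)
      moreover have "y \<in> vec.span (\<Union>F)" using \<open>y \<in> E\<close> E(1) by (intro vec.span_base) blast
      moreover have "(0::'a^'n) \<in> Kset R" using Kset_subspace[OF R] by (rule vec.subspace_0)
      ultimately show ?thesis unfolding M_def by force
    next
      case False
      then have "x \<in> Kset R" using fE E(2) by blast
      moreover have "R 0 = 0" by (rule vec.linear_0[OF R])
      ultimately have "x = R 0 + x" "0 \<in> vec.span (\<Union>F)" by (simp_all add: vec.span_zero)
      then show ?thesis unfolding M_def using \<open>x \<in> Kset R\<close> by blast
    qed
  qed
  then have "vec.span (\<Union>F) \<subseteq> M" using Msub by (rule vec.span_minimal)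
  then obtain y k where yk: "y \<in> vec.span (\<Union>F)" "k \<in> Kset R" "R v = R y + k"
    using Rv unfolding M_def by blast
  have "R (v - y) = k" using yk(3) by (simp add: vec.linear_diff[OF R])
  then obtain N where "(R^^N) (R (v - y)) = 0" using yk(2) unfolding Kset_def by blast
  then have "(R^^Suc N) (v - y) = 0" by (simp add: funpow_swap1)
  then have "v - y \<in> Kset R" unfolding Kset_def by blast
  then have "v - y \<in> vec.span (\<Union>F)" using KR by blast
  then have "(v - y) + y \<in> vec.span (\<Union>F)" using yk(1) by (rule vec.span_add)
  then show ?thesis by simp
qed

lemma inj_on_kernel:
  assumes R: "vlin R" and E: "vec.subspace E" and k: "\<And>x. x \<in> E \<Longrightarrow> R x = 0 \<Longrightarrow> x = 0"
  shows "inj_on R E"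
proof (rule inj_onI)
  fix x y assume "x \<in> E" "y \<in> E" "R x = R y"
  then have "R (x - y) = 0" "x - y \<in> E" using vec.linear_diff[OF R] vec.subspace_diff[OF E] by auto
  then show "x = y" using k[of "x - y"] by simp
qed

lemma scalar_funpow:
  assumes R: "vlin R" and "R x = k *s x"
  shows "(R^^N) x = k^N *s x"
proof (induction N)
  case 0 then show ?case by simp
next
  case (Suc N)
  have "(R^^Suc N) x = R (k^N *s x)" using Suc by simp
  also have "\<dots> = k^N *s (k *s x)" using assms by (simp add: vec.linear_scale[OF R])
  finally show ?case by (simp add: vec.scale_scale mult.commute)
qed

lemma scalar_Kset:
  assumes R: "vlin R" and "R x = k *s x" "k \<noteq> 0" "x \<in> Kset R"
  shows "x = 0"
proof -
  obtain N where "(R^^N) x = 0" using assms(4) unfolding Kset_def by blast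
  then have "k^N *s x = 0" using scalar_funpow[OF R assms(2)] by simp
  then show ?thesis using assms(3) by simp
qed

lemma last_nonzero:
  assumes R: "vlin R" and Q: "vlin Q" and comm: "\<And>x. Q (R x) = R (Q x)"
  shows "(R^^N) x = 0 \<Longrightarrow> Q x = 0 \<Longrightarrow> x \<noteq> 0 \<Longrightarrow> \<exists>y. y \<noteq> 0 \<and> R y = 0 \<and> Q y = 0"
proof (induction N arbitrary: x)
  case 0 then show ?case by simp
next
  case (Suc N)
  show ?case
  proof (cases "R x = 0")
    case True then show ?thesis using Suc.prems by blast
  next
    case False
    have "(R^^N) (R x) = 0" using Suc.prems(1) by (simp add: funpow_swap1)
    moreover have "Q (R x) = 0" using comm Suc.prems(2) vec.linear_0[OF R] by simp
    ultimately show ?thesis using Suc.IH False by blast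
  qed
qed


definition linR :: "'a::field^'n^'n \<Rightarrow> 'a \<Rightarrow> 'a^'n \<Rightarrow> 'a^'n" where
  "linR P c = (\<lambda>x. P *v x - c *s x)"

lemma gen_eig_K: "gen_eigenspace P c = Kset (linR P c)"
  by (simp add: gen_eigenspace_def Kset_def linR_def)

lemma linR_lin: "vlin (linR P c)"
  by (rule vlinI) (simp_all add: linR_def matrix_vector_right_distrib vec.scale_right_distrib
      vector_scalar_commute vec.scale_right_diff_distrib vec.scale_scale mult.commute)

lemma linR_good:
  assumes sa: "self_adjoint G P" shows "good_op G P (linR P c)"
  unfolding good_op_def
proof (intro conjI allI impI)
  show "vlin (linR P c)" by (rule linR_lin)
next
  fix u v
  have "bform G (P *v u) v = bform G u (P *v v)" using sa unfolding self_adjoint_def by blast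
  then show "bform G (linR P c u) v = bform G u (linR P c v)"
    by (simp add: linR_def bform_diff_left bform_diff_right bform_scale_left bform_scale_right)
next
  fix g u assume g: "vlin g \<and> (\<forall>u. g (P *v u) = P *v g u)"
  then show "g (linR P c u) = linR P c (g u)"
    by (simp add: linR_def vec.linear_diff vec.linear_scale)
qed

lemma linR_eig: "linR P c x = 0 \<Longrightarrow> P *v x = c *s x"
  by (simp add: linR_def)

lemma K1:
  assumes "c \<noteq> d" "x \<in> Kset (linR P d)" "linR P c x = 0"
  shows "x = 0"
proof -
  have eq: "linR P d x = (c - d) *s x"
    using linR_eig[OF assms(3)] by (simp add: linR_def vec.scale_left_diff_distrib)
  show ?thesis by (rule scalar_Kset[OF linR_lin eq _ assms(2)]) (use assms(1) in simp)
qed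

lemma lift_good:
  fixes R :: "'a::field^'n \<Rightarrow> 'a^'n" and F :: "('a^'n) set set"
  assumes R: "good_op G P R"
    and fam: "\<And>E. E \<in> F \<Longrightarrow> \<exists>Q'. good_op G P Q' \<and> E = Kset Q'"
    and dich: "\<And>E. E \<in> F \<Longrightarrow> inj_on R E \<or> E = Kset R"
    and KR: "Kset R = {0} \<or> Kset R \<in> F"
    and Rv: "R v \<in> vec.span (\<Union>F)"
  shows "v \<in> vec.span (\<Union>F)"
proof (rule lift[OF good_op_lin[OF R] _ _ Rv])
  fix E assume E: "E \<in> F"
  obtain Q' where Q': "good_op G P Q'" "E = Kset Q'" using fam[OF E] by blast
  have comm: "\<And>u. R (Q' u) = Q' (R u)"
    by (rule good_op_comm[OF Q'(1) good_op_lin[OF R]]) (simp add: good_op_P[OF R])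
  have "R ` E \<subseteq> E" unfolding Q'(2) by (rule Kset_invariant[of R Q', OF good_op_lin[OF R] comm])
  moreover have "vec.subspace E" unfolding Q'(2) by (rule Kset_subspace[OF good_op_lin[OF Q'(1)]])
  ultimately show "vec.subspace E \<and> R ` E \<subseteq> E \<and> (inj_on R E \<or> E = Kset R)" using dich[OF E] by blast
next
  show "Kset R \<subseteq> vec.span (\<Union>F)"
  proof (cases "Kset R = {0}")
    case True then show ?thesis by (simp add: vec.span_zero)
  next
    case False
    then have "Kset R \<in> F" using KR by blast
    then have "Kset R \<subseteq> \<Union>F" by blast
    then show ?thesis using vec.span_superset by blast
  qed
qed

lemma evalP_deg0:
  assumes "degree p = 0" "p \<noteq> 0" "evalP L p v = 0" shows "v = 0"
proof -
  have "coeff p 0 \<noteq> 0" using assms(1,2) leading_coeff_neq_0[of p] by simp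
  moreover have "evalP L p v = coeff p 0 *s v" using assms(1) by (simp add: evalP_def)
  ultimately show ?thesis using assms(3) by simp
qed

lemma complex_family:
  fixes G P :: "complex^'m^'m"
  assumes sa: "self_adjoint G P"
  shows "good_family G P (gen_eigenspaces_complex P)"
proof -
  let ?F = "gen_eigenspaces_complex P"
  have fam: "\<And>E. E \<in> ?F \<Longrightarrow> \<exists>Q'. good_op G P Q' \<and> E = Kset Q'"
    unfolding gen_eigenspaces_complex_def gen_eig_K using linR_good[OF sa] by blast
  have dich: "inj_on (linR P c) E \<or> E = Kset (linR P c)" if E: "E \<in> ?F" for E c
  proof -
    obtain d where d: "E = Kset (linR P d)" using E unfolding gen_eigenspaces_complex_def gen_eig_K by blast
    show ?thesis
    proof (cases "c = d")
      case True then show ?thesis using d by simp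
    next
      case False
      have "inj_on (linR P c) E"
        by (rule inj_on_kernel[OF linR_lin]) (use d Kset_subspace[OF linR_lin] K1[OF False] in auto)
      then show ?thesis by blast
    qed
  qed
  have KR: "Kset (linR P c) = {0} \<or> Kset (linR P c) \<in> ?F" for c
    unfolding gen_eigenspaces_complex_def gen_eig_K by blast
  have main: "\<forall>p v. p \<noteq> 0 \<longrightarrow> degree p = n \<longrightarrow> evalP ((*v) P) p v = 0 \<longrightarrow> v \<in> vec.span (\<Union>?F)" for n
  proof (induction n rule: less_induct)
    case (less n)
    show ?case
    proof (intro allI impI)
      fix p v assume p: "p \<noteq> 0" "degree p = n" "evalP ((*v) P) p v = 0"
      show "v \<in> vec.span (\<Union>?F)"
      proof (cases "n = 0")
        case True
        then have "v = 0" using evalP_deg0 p by blast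
        then show ?thesis by (simp add: vec.span_zero)
      next
        case False
        then have "\<not> constant (poly p)" using p(2) constant_degree by metis
        then obtain z where "poly p z = 0" using fundamental_theorem_of_algebra by blast
        then obtain q where q: "p = [:-z, 1:] * q" using poly_eq_0_iff_dvd by (metis dvdE)
        have q0: "q \<noteq> 0" using p(1) q by auto
        have "degree p = 1 + degree q" unfolding q by (subst degree_mult_eq) (use q0 in auto)
        then have dq: "degree q < n" using p(2) by simp
        have "evalP ((*v) P) p v = evalP ((*v) P) q (evalP ((*v) P) [:-z, 1:] v)"
          unfolding q by (subst mult.commute) (rule evalP_mult[OF matrix_vector_mul_linear_gen])
        also have "evalP ((*v) P) [:-z, 1:] v = linR P z v"
          by (simp add: evalP_lin[OF matrix_vector_mul_linear_gen] linR_def)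
        finally have "evalP ((*v) P) q (linR P z v) = 0" using p(3) by simp
        then have "linR P z v \<in> vec.span (\<Union>?F)" using less.IH[OF dq] q0 by blast
        show ?thesis
        proof (rule lift_good[where R="linR P z" and G=G and P=P])
          show "good_op G P (linR P z)" by (rule linR_good[OF sa])
          show "\<And>E. E \<in> ?F \<Longrightarrow> \<exists>Q'. good_op G P Q' \<and> E = Kset Q'" by (rule fam)
          show "\<And>E. E \<in> ?F \<Longrightarrow> inj_on (linR P z) E \<or> E = Kset (linR P z)" by (rule dich)
          show "Kset (linR P z) = {0} \<or> Kset (linR P z) \<in> ?F" by (rule KR)
        qed fact
      qed
    qed
  qed
  have span: "vec.span (\<Union>?F) = UNIV"
  proof -
    have "v \<in> vec.span (\<Union>?F)" for v
    proof -
      obtain p where "p \<noteq> 0" "evalP ((*v) P) p v = 0" using annihilating by blast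
      then show ?thesis using main by blast
    qed
    then show ?thesis by blast
  qed
  show ?thesis
    unfolding good_family_def
  proof (intro conjI ballI span)
    fix S assume S: "S \<in> ?F"
    then obtain c where c: "S = Kset (linR P c)" unfolding gen_eigenspaces_complex_def gen_eig_K by blast
    show "\<exists>Q. good_op G P Q \<and> S = Kset Q \<and> (\<forall>S'\<in>?F. S' \<noteq> S \<longrightarrow> inj_on Q S')"
      using linR_good[OF sa] c dich by blast
  qed
qed


definition quadR :: "real^'n^'n \<Rightarrow> real \<Rightarrow> real \<Rightarrow> real^'n \<Rightarrow> real^'n" where
  "quadR P a b = (\<lambda>x. P *v (P *v x) - (2 * a) *s (P *v x) + (a^2 + b^2) *s x)"

lemma gen_pair_K: "gen_eigenspace_pair P a b = Kset (quadR P a b)"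
  by (simp add: gen_eigenspace_pair_def Kset_def quadR_def)

lemma quadR_scaleR: "quadR P a b x = P *v (P *v x) - (2 * a) *\<^sub>R (P *v x) + (a^2 + b^2) *\<^sub>R x"
  by (simp add: quadR_def scalar_mult_eq_scaleR)

lemma linR_scaleR: "linR P c x = P *v x - c *\<^sub>R x"
  by (simp add: linR_def scalar_mult_eq_scaleR)

lemma quadR_lin: "vlin (quadR P a b)"
  by (rule vlinI) (simp_all add: quadR_scaleR scalar_mult_eq_scaleR matrix_vector_right_distrib
      matrix_vector_mult_scaleR algebra_simps)

lemma quadR_P: "quadR P a b (P *v x) = P *v quadR P a b x"
  by (simp add: quadR_scaleR matrix_vector_right_distrib matrix_vector_mult_diff_distrib
      matrix_vector_mult_scaleR)

lemma quadR_good: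
  fixes G P :: "real^'n^'n"
  assumes sa: "self_adjoint G P" shows "good_op G P (quadR P a b)"
  unfolding good_op_def
proof (intro conjI allI impI)
  show "vlin (quadR P a b)" by (rule quadR_lin)
next
  fix u v
  have s: "\<And>u v. bform G (P *v u) v = bform G u (P *v v)" using sa unfolding self_adjoint_def by blast
  have "bform G (P *v (P *v u)) v = bform G u (P *v (P *v v))" using s by metis
  then show "bform G (quadR P a b u) v = bform G u (quadR P a b v)"
    by (simp add: quadR_def bform_add_left bform_add_right bform_diff_left bform_diff_right
        bform_scale_left bform_scale_right s)
next
  fix g u assume g: "vlin g \<and> (\<forall>u. g (P *v u) = P *v g u)"
  then show "g (quadR P a b u) = quadR P a b (g u)"
    by (simp add: quadR_def vec.linear_diff vec.linear_add vec.linear_scale)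
qed

lemma comm_lin:
  assumes Q: "vlin Q" and "\<And>x. Q (P *v x) = P *v Q x"
  shows "Q (linR P d x) = linR P d (Q x)"
  using assms by (simp add: linR_def vec.linear_diff[OF Q] vec.linear_scale[OF Q])

lemma comm_quad:
  assumes Q: "vlin Q" and "\<And>x. Q (P *v x) = P *v Q x"
  shows "Q (quadR P a b x) = quadR P a b (Q x)"
  using assms by (simp add: quadR_def vec.linear_diff[OF Q] vec.linear_add[OF Q] vec.linear_scale[OF Q])

lemma quad_on_eig:
  assumes "linR P c y = 0"
  shows "quadR P a b y = ((c - a)^2 + b^2) *\<^sub>R y"
proof -
  have Py: "P *v y = c *\<^sub>R y" using assms by (simp add: linR_scaleR)
  have PPy: "P *v (P *v y) = (c * c) *\<^sub>R y" by (simp add: Py matrix_vector_mult_scaleR)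
  show ?thesis
    by (simp add: quadR_scaleR Py PPy power2_eq_square algebra_simps)
qed

lemma K2:
  assumes "b' > 0" "x \<in> Kset (quadR P a' b')" "linR P c x = 0"
  shows "x = 0"
proof -
  have eq: "quadR P a' b' x = ((c - a')^2 + b'^2) *s x"
    using quad_on_eig[OF assms(3)] by (simp add: scalar_mult_eq_scaleR)
  have "(c - a')^2 + b'^2 \<noteq> 0" using assms(1)
    by (metis add_nonneg_pos not_real_square_gt_zero zero_less_power2 less_irrefl zero_le_power2)
  then show ?thesis by (rule scalar_Kset[OF quadR_lin eq _ assms(2)])
qed

lemma K3:
  assumes "b > 0" "x \<in> Kset (linR P d)" "quadR P a b x = 0"
  shows "x = 0"
proof (rule ccontr)
  assume x0: "x \<noteq> 0"
  obtain N where N: "((linR P d)^^N) x = 0" using assms(2) unfolding Kset_def by blast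
  have comm: "\<And>x. quadR P a b (linR P d x) = linR P d (quadR P a b x)"
    by (rule comm_lin[OF quadR_lin quadR_P])
  obtain y where y: "y \<noteq> 0" "linR P d y = 0" "quadR P a b y = 0"
    using last_nonzero[OF linR_lin quadR_lin comm N assms(3) x0] by blast
  have "((d - a)^2 + b^2) *\<^sub>R y = 0" using quad_on_eig[OF y(2)] y(3) by simp
  moreover have "(d - a)^2 + b^2 \<noteq> 0" using assms(1)
    by (metis add_nonneg_pos zero_less_power2 less_irrefl zero_le_power2)
  ultimately show False using y(1) by simp
qed

lemma K4:
  assumes "b > 0" "b' > 0" "(a, b) \<noteq> (a', b')" "x \<in> Kset (quadR P a' b')" "quadR P a b x = 0"
  shows "x = 0"
proof (rule ccontr)
  assume x0: "x \<noteq> 0"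
  obtain N where N: "((quadR P a' b')^^N) x = 0" using assms(4) unfolding Kset_def by blast
  have comm: "\<And>x. quadR P a b (quadR P a' b' x) = quadR P a' b' (quadR P a b x)"
    by (rule comm_quad[OF quadR_lin quadR_P])
  obtain y where y: "y \<noteq> 0" "quadR P a' b' y = 0" "quadR P a b y = 0"
    using last_nonzero[OF quadR_lin quadR_lin comm N assms(5) x0] by blast
  have "quadR P a b y - quadR P a' b' y = 0" using y by simp
  then have diff: "(2 * a' - 2 * a) *\<^sub>R (P *v y) = (a'^2 + b'^2 - a^2 - b^2) *\<^sub>R y"
    by (simp add: quadR_scaleR algebra_simps)
  show False
  proof (cases "a = a'")
    case True
    then have "b \<noteq> b'" using assms(3) by simp
    then have "b^2 \<noteq> b'^2" using assms(1,2) by (simp add: power2_eq_iff)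
    then have "b'^2 - b^2 \<noteq> 0" by simp
    moreover have "(b'^2 - b^2) *\<^sub>R y = 0" using diff True by simp
    ultimately show False using y(1) by simp
  next
    case False
    define k where "k = (a'^2 + b'^2 - a^2 - b^2) / (2 * a' - 2 * a)"
    have nz: "2 * a' - 2 * a \<noteq> 0" using False by simp
    have "P *v y = k *\<^sub>R y"
    proof -
      have "P *v y = (1 / (2 * a' - 2 * a)) *\<^sub>R ((2 * a' - 2 * a) *\<^sub>R (P *v y))"
        using nz by simp
      also have "\<dots> = k *\<^sub>R y" unfolding diff k_def by (simp add: divide_inverse mult.commute)
      finally show ?thesis .
    qed
    then have "linR P k y = 0" by (simp add: linR_scaleR)
    from quad_on_eig[OF this, of a' b'] y(2)
    have "((k - a')^2 + b'^2) *\<^sub>R y = 0" by simp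
    moreover have "(k - a')^2 + b'^2 \<noteq> 0" using assms(2)
      by (metis add_nonneg_pos zero_less_power2 less_irrefl zero_le_power2)
    ultimately show False using y(1) by simp
  qed
qed


lemma mp_coeff: "coeff (map_poly complex_of_real p) i = of_real (coeff p i)"
  by (simp add: coeff_map_poly)

lemma mp_degree: "degree (map_poly complex_of_real p) = degree p"
  by (rule degree_map_poly) simp

lemma mp_pCons: "map_poly complex_of_real (pCons c p) = pCons (of_real c) (map_poly of_real p)"
  by (rule poly_eqI) (simp add: mp_coeff coeff_pCons split: nat.split)

lemma mp_mult: "map_poly complex_of_real (p * q) = map_poly of_real p * map_poly of_real q"
  by (rule poly_eqI) (simp add: mp_coeff coeff_mult)

lemma mp_add: "map_poly complex_of_real (p + q) = map_poly of_real p + map_poly of_real q"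
  by (rule poly_eqI) (simp add: mp_coeff)

lemma mp_poly_real: "poly (map_poly complex_of_real p) (of_real x) = of_real (poly p x)"
  by (simp add: poly_altdef mp_coeff mp_degree)

lemma real_factor:
  fixes p :: "real poly"
  assumes "degree p > 0"
  shows "(\<exists>c q. p = [:-c, 1:] * q) \<or> (\<exists>a b q. b > 0 \<and> p = [:a^2 + b^2, -(2*a), 1:] * q)"
proof -
  define cp where "cp = map_poly complex_of_real p"
  have "degree cp > 0" unfolding cp_def mp_degree by (rule assms)
  then have "\<not> constant (poly cp)" using constant_degree by (metis less_irrefl)
  then obtain z where z: "poly cp z = 0" using fundamental_theorem_of_algebra by blast
  show ?thesis
  proof (cases "Im z = 0")
    case True
    then have "z = of_real (Re z)" by (simp add: complex_eq_iff)
    then have "of_real (poly p (Re z)) = (0::complex)" using z unfolding cp_def by (metis mp_poly_real)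
    then have "poly p (Re z) = 0" by simp
    then have "[:-Re z, 1:] dvd p" by (simp add: poly_eq_0_iff_dvd)
    then show ?thesis by (metis dvdE)
  next
    case False
    define a where "a = Re z"
    define b where "b = \<bar>Im z\<bar>"
    have b0: "b > 0" unfolding b_def using False by simp
    define r :: "real poly" where "r = [:a^2 + b^2, -(2*a), 1:]"
    have r0: "r \<noteq> 0" unfolding r_def by simp
    have dr: "degree r = 2" unfolding r_def by simp
    define s where "s = p mod r"
    define q where "q = p div r"
    have pqs: "p = r * q + s" unfolding s_def q_def by simp
    have b2: "b * b = Im z * Im z" unfolding b_def by (simp add: abs_mult_self_eq)
    have "poly (map_poly complex_of_real r) z = 0"
      unfolding r_def
      by (simp add: mp_pCons complex_eq_iff a_def b2 power2_eq_square algebra_simps)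
    then have ps: "poly (map_poly complex_of_real s) z = 0"
      using z unfolding cp_def by (subst (asm) pqs) (simp add: mp_add mp_mult)
    have "s = 0"
    proof (rule ccontr)
      assume s0: "s \<noteq> 0"
      then have "degree s < 2" using degree_mod_less[OF r0, of p] dr unfolding s_def by auto
      define c0 where "c0 = coeff s 0"
      define c1 where "c1 = coeff s 1"
      have s_eq: "s = [:c0, c1:]"
      proof (rule poly_eqI)
        fix n
        show "coeff s n = coeff [:c0, c1:] n"
        proof (cases "n < 2")
          case True
          then have "n = 0 \<or> n = 1" by auto
          then show ?thesis unfolding c0_def c1_def by auto
        next
          case False
          then obtain m where m: "n = Suc (Suc m)" by (metis add_2_eq_Suc le_add_diff_inverse not_less)
          have "coeff s n = 0" by (rule coeff_eq_0) (use \<open>degree s < 2\<close> False in simp)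
          then show ?thesis using m by simp
        qed
      qed
      have "map_poly complex_of_real s = [:of_real c0, of_real c1:]"
        unfolding s_eq by (simp add: mp_pCons)
      then have "of_real c0 + z * of_real c1 = (0::complex)" using ps by simp
      then have "c1 * Im z = 0" "c0 + Re z * c1 = 0"
        by (simp_all add: complex_eq_iff mult.commute)
      then have "c1 = 0" "c0 = 0" using False by auto
      then have "s = 0" using s_eq by simp
      then show False using s0 by simp
    qed
    then have "p = r * q" using pqs by simp
    then show ?thesis using b0 unfolding r_def by blast
  qed
qed


lemma real_family:
  fixes G P :: "real^'n^'n"
  assumes sa: "self_adjoint G P"
  shows "good_family G P (gen_eigenspaces_real P)"
proof -
  let ?F = "gen_eigenspaces_real P"
  have memF: "E \<in> ?F \<longleftrightarrow> E \<noteq> {0} \<and> ((\<exists>c. E = Kset (linR P c)) \<or> (\<exists>a b. b > 0 \<and> E = Kset (quadR P a b)))" for E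
    unfolding gen_eigenspaces_real_def gen_eig_K gen_pair_K by blast
  have fam: "\<exists>Q'. good_op G P Q' \<and> E = Kset Q'" if E: "E \<in> ?F" for E
  proof -
    have "(\<exists>c. E = Kset (linR P c)) \<or> (\<exists>a b. b > 0 \<and> E = Kset (quadR P a b))"
      using E memF by blast
    then show ?thesis using linR_good[OF sa] quadR_good[OF sa] by blast
  qed
  have subF: "vec.subspace E" if E: "E \<in> ?F" for E
  proof -
    obtain Q' where "good_op G P Q'" "E = Kset Q'" using fam[OF E] by blast
    then show ?thesis using Kset_subspace[OF good_op_lin] by simp
  qed
  have dich_lin: "inj_on (linR P c) E \<or> E = Kset (linR P c)" if E: "E \<in> ?F" for E c
  proof -
    have sub: "vec.subspace E" by (rule subF[OF E])
    have "(\<exists>d. E = Kset (linR P d)) \<or> (\<exists>a' b'. b' > 0 \<and> E = Kset (quadR P a' b'))"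
      using E memF by blast
    then consider d where "E = Kset (linR P d)" | a' b' where "b' > 0" "E = Kset (quadR P a' b')"
      by blast
    then show ?thesis
    proof cases
      case (1 d)
      show ?thesis
      proof (cases "c = d")
        case True then show ?thesis using 1 by simp
      next
        case False
        have "inj_on (linR P c) E"
          by (rule inj_on_kernel[OF linR_lin sub]) (use 1 K1[OF False] in auto)
        then show ?thesis by blast
      qed
    next
      case (2 a' b')
      have "inj_on (linR P c) E"
        by (rule inj_on_kernel[OF linR_lin sub]) (use 2 K2[OF 2(1)] in auto)
      then show ?thesis by blast
    qed
  qed
  have dich_quad: "inj_on (quadR P a b) E \<or> E = Kset (quadR P a b)" if E: "E \<in> ?F" and b: "b > 0" for E a b
  proof -
    have sub: "vec.subspace E" by (rule subF[OF E])
    have "(\<exists>d. E = Kset (linR P d)) \<or> (\<exists>a' b'. b' > 0 \<and> E = Kset (quadR P a' b'))"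
      using E memF by blast
    then consider d where "E = Kset (linR P d)" | a' b' where "b' > 0" "E = Kset (quadR P a' b')"
      by blast
    then show ?thesis
    proof cases
      case (1 d)
      have "inj_on (quadR P a b) E"
        by (rule inj_on_kernel[OF quadR_lin sub]) (use 1 K3[OF b] in auto)
      then show ?thesis by blast
    next
      case (2 a' b')
      show ?thesis
      proof (cases "(a, b) = (a', b')")
        case True then show ?thesis using 2 by simp
      next
        case False
        have "inj_on (quadR P a b) E"
          by (rule inj_on_kernel[OF quadR_lin sub]) (use 2 K4[OF b 2(1) False] in auto)
        then show ?thesis by blast
      qed
    qed
  qed
  have KR_lin: "Kset (linR P c) = {0} \<or> Kset (linR P c) \<in> ?F" for c
    using memF by blast
  have KR_quad: "Kset (quadR P a b) = {0} \<or> Kset (quadR P a b) \<in> ?F" if "b > 0" for a b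
    using memF that by blast
  let ?L = "(*v) P"
  have main: "\<forall>p v. p \<noteq> 0 \<longrightarrow> degree p = n \<longrightarrow> evalP ?L p v = 0 \<longrightarrow> v \<in> vec.span (\<Union>?F)" for n
  proof (induction n rule: less_induct)
    case (less n)
    show ?case
    proof (intro allI impI)
      fix p v assume p: "p \<noteq> 0" "degree p = n" "evalP ?L p v = 0"
      show "v \<in> vec.span (\<Union>?F)"
      proof (cases "n = 0")
        case True
        then have "v = 0" using evalP_deg0 p by blast
        then show ?thesis by (simp add: vec.span_zero)
      next
        case False
        then have "degree p > 0" using p(2) by simp
        then consider c q where "p = [:-c, 1:] * q"
          | a b q where "b > 0" "p = [:a^2 + b^2, -(2*a), 1:] * q"
          using real_factor by blast
        then show ?thesis
        proof cases
          case (1 c q)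
          have q0: "q \<noteq> 0" using p(1) 1 by auto
          have "degree p = 1 + degree q" unfolding 1 by (subst degree_mult_eq) (use q0 in auto)
          then have dq: "degree q < n" using p(2) by simp
          have "evalP ?L p v = evalP ?L q (evalP ?L [:-c, 1:] v)"
            unfolding 1 by (subst mult.commute) (rule evalP_mult[OF matrix_vector_mul_linear_gen])
          also have "evalP ?L [:-c, 1:] v = linR P c v"
            by (simp add: evalP_lin[OF matrix_vector_mul_linear_gen] linR_def)
          finally have "evalP ?L q (linR P c v) = 0" using p(3) by simp
          then have "linR P c v \<in> vec.span (\<Union>?F)" using less.IH[OF dq] q0 by blast
          then show ?thesis
          proof (rule lift_good[where R="linR P c" and G=G and P=P, rotated -1])
            show "good_op G P (linR P c)" by (rule linR_good[OF sa])
            show "\<And>E. E \<in> ?F \<Longrightarrow> \<exists>Q'. good_op G P Q' \<and> E = Kset Q'" by (rule fam)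
            show "\<And>E. E \<in> ?F \<Longrightarrow> inj_on (linR P c) E \<or> E = Kset (linR P c)" by (rule dich_lin)
            show "Kset (linR P c) = {0} \<or> Kset (linR P c) \<in> ?F" by (rule KR_lin)
          qed
        next
          case (2 a b q)
          have q0: "q \<noteq> 0" using p(1) 2 by auto
          have "degree p = 2 + degree q" unfolding 2 by (subst degree_mult_eq) (use q0 in auto)
          then have dq: "degree q < n" using p(2) by simp
          have "evalP ?L p v = evalP ?L q (evalP ?L [:a^2 + b^2, -(2*a), 1:] v)"
            unfolding 2 by (subst mult.commute) (rule evalP_mult[OF matrix_vector_mul_linear_gen])
          also have "evalP ?L [:a^2 + b^2, -(2*a), 1:] v = quadR P a b v"
            by (simp add: evalP_quad[OF matrix_vector_mul_linear_gen] quadR_def)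
          finally have "evalP ?L q (quadR P a b v) = 0" using p(3) by simp
          then have "quadR P a b v \<in> vec.span (\<Union>?F)" using less.IH[OF dq] q0 by blast
          then show ?thesis
          proof (rule lift_good[where R="quadR P a b" and G=G and P=P, rotated -1])
            show "good_op G P (quadR P a b)" by (rule quadR_good[OF sa])
            show "\<And>E. E \<in> ?F \<Longrightarrow> \<exists>Q'. good_op G P Q' \<and> E = Kset Q'" by (rule fam)
            show "\<And>E. E \<in> ?F \<Longrightarrow> inj_on (quadR P a b) E \<or> E = Kset (quadR P a b)"
              by (rule dich_quad[OF _ 2(1)])
            show "Kset (quadR P a b) = {0} \<or> Kset (quadR P a b) \<in> ?F" by (rule KR_quad[OF 2(1)])
          qed
        qed
      qed
    qed
  qed
  have span: "vec.span (\<Union>?F) = UNIV"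
  proof -
    have "v \<in> vec.span (\<Union>?F)" for v
    proof -
      obtain p where "p \<noteq> 0" "evalP ?L p v = 0" using annihilating by blast
      then show ?thesis using main by blast
    qed
    then show ?thesis by blast
  qed
  show ?thesis
    unfolding good_family_def
  proof (intro conjI ballI span)
    fix S assume S: "S \<in> ?F"
    then have "(\<exists>c. S = Kset (linR P c)) \<or> (\<exists>a b. b > 0 \<and> S = Kset (quadR P a b))"
      using memF by blast
    then consider c where "S = Kset (linR P c)" | a b where "b > 0" "S = Kset (quadR P a b)"
      by blast
    then show "\<exists>Q. good_op G P Q \<and> S = Kset Q \<and> (\<forall>S'\<in>?F. S' \<noteq> S \<longrightarrow> inj_on Q S')"
    proof cases
      case (1 c) then show ?thesis using linR_good[OF sa] dich_lin by blast
    next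
      case (2 a b) then show ?thesis using quadR_good[OF sa] dich_quad[OF _ 2(1)] by blast
    qed
  qed
qed

theorem theorem6:
  shows "(\<forall>(G::real^'n^'n) (P::real^'n^'n) (W::(real^'n) set).
            symplectic G \<and> self_adjoint G P \<and> vec.subspace W \<longrightarrow>
            (aut_invariant UNIV G P W \<longleftrightarrow>
               W = vec.span (\<Union>S\<in>gen_eigenspaces_real P. W \<inter> S) \<and>
               (\<forall>S\<in>gen_eigenspaces_real P. aut_invariant S G P (W \<inter> S))))
       \<and> (\<forall>(G::complex^'m^'m) (P::complex^'m^'m) (W::(complex^'m) set).
            symplectic G \<and> self_adjoint G P \<and> vec.subspace W \<longrightarrow>
            (aut_invariant UNIV G P W \<longleftrightarrow>
               W = vec.span (\<Union>S\<in>gen_eigenspaces_complex P. W \<inter> S) \<and>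
               (\<forall>S\<in>gen_eigenspaces_complex P. aut_invariant S G P (W \<inter> S))))"
proof (intro conjI allI impI)
  fix G P :: "real^'n^'n" and W :: "(real^'n) set"
  assume h: "symplectic G \<and> self_adjoint G P \<and> vec.subspace W"
  show "aut_invariant UNIV G P W \<longleftrightarrow>
               W = vec.span (\<Union>S\<in>gen_eigenspaces_real P. W \<inter> S) \<and>
               (\<forall>S\<in>gen_eigenspaces_real P. aut_invariant S G P (W \<inter> S))"
    by (rule abstract_main[OF real_family]) (use h in blast)+
next
  fix G P :: "complex^'m^'m" and W :: "(complex^'m) set"
  assume h: "symplectic G \<and> self_adjoint G P \<and> vec.subspace W"
  show "aut_invariant UNIV G P W \<longleftrightarrow>
               W = vec.span (\<Union>S\<in>gen_eigenspaces_complex P. W \<inter> S) \<and>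
               (\<forall>S\<in>gen_eigenspaces_complex P. aut_invariant S G P (W \<inter> S))"
    by (rule abstract_main[OF complex_family]) (use h in blast)+
qed

end
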